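(* Let $\phi$ be the real root of $x^3=x^2+x+1$. For any positive integers $n,k$ with $k\ge 4$, the number of positive tribonacci sequences of length $k$ terminating at $n$ is at most \[\left\lceil 1500\frac{n}{\phi^{3k/2}}\right\rceil^2.\]
   Context: A tribonacci sequence of length $k$ is a sequence of integers $\langle a_i\rangle_{i=1}^k$ such that $a_i=a_{i-1}+a_{i-2}+a_{i-3}$ for all $4\le i\le k$. It terminates at $a_k$, and it is positive if $a_1,a_2,a_3>0$. *)

theory Defs
  imports Complex_Main
begin

(* A tribonacci sequence of length k, represented as a list a with a!(i-1) = a_i. *)
definition is_tribonacci :: "nat \<Rightarrow> int list \<Rightarrow> bool" where
  "is_tribonacci k a \<longleftrightarrow> length a = k \<and>
     (\<forall>i. 4 \<le> i \<and> i \<le> k \<longrightarrow> a!(i-1) = a!(i-2) + a!(i-3) + a!(i-4))"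

definition positive_trib :: "int list \<Rightarrow> bool" where
  "positive_trib a \<longleftrightarrow> a!0 > 0 \<and> a!1 > 0 \<and> a!2 > 0"

definition terminates_at :: "nat \<Rightarrow> int list \<Rightarrow> int \<Rightarrow> bool" where
  "terminates_at k a n \<longleftrightarrow> a!(k-1) = n"

definition trib_phi :: real where
  "trib_phi = (THE x::real. x^3 = x^2 + x + 1)"

end

theory Submission
  imports Defs
begin


lemma phi_props: "1.83 \<le> trib_phi \<and> trib_phi \<le> 1.84 \<and> trib_phi^3 = trib_phi^2 + trib_phi + 1"
proof -
  let ?f = "\<lambda>x::real. x^3 - x^2 - x - 1"
  have "\<exists>x. 1.83 \<le> x \<and> x \<le> 1.84 \<and> ?f x = 0"
    by (rule IVT) (auto intro!: continuous_intros simp: power3_eq_cube power2_eq_square)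
  then obtain r :: real where r: "1.83 \<le> r" "r \<le> 1.84" "?f r = 0" by blast
  have uniq: "x = r" if hx: "x^3 = x^2 + x + 1" for x :: real
  proof (rule ccontr)
    assume ne: "x \<noteq> r"
    have "(x - r) * (x^2 + x*r + r^2 - x - r - 1) = ?f x - ?f r"
      by (simp add: algebra_simps power2_eq_square power3_eq_cube)
    also have "\<dots> = 0" using hx r(3) by simp
    finally have z: "x^2 + x*r + r^2 - x - r - 1 = 0" using ne by simp
    have "x^2 + x*r + r^2 - x - r - 1 = (x + (r-1)/2)^2 + (r^2 - r - 1 - (r-1)^2/4)"
      by (simp add: algebra_simps power2_eq_square field_simps)
    moreover have "r^2 - r - 1 - (r-1)^2/4 > 0"
    proof -
      have "r^2 \<ge> 1.83^2" using r by (intro power_mono) auto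
      then have a: "r^2 \<ge> 3.3489" by (simp add: power2_eq_square)
      have "(r-1)^2 \<le> 0.84^2" using r by (intro power_mono) auto
      then have b: "(r-1)^2 \<le> 0.7056" by (simp add: power2_eq_square)
      show ?thesis using a b r by (simp add: field_simps)
    qed
    ultimately have "x^2 + x*r + r^2 - x - r - 1 > 0"
      by (smt (verit) zero_le_power2)
    with z show False by simp
  qed
  have "trib_phi = r" unfolding trib_phi_def
    by (rule the_equality) (use r(3) uniq in auto)
  then show ?thesis using r by simp
qed



lemma Pstep:
  fixes p B0 B1 B2 :: real
  assumes "p*B2 = -(p*(p-1)*B1 + B0)"
  shows "(p*B2^2 + p*(p-1)*B2*B1 + B1^2)*p = p*B1^2 + p*(p-1)*B1*B0 + B0^2"
proof -
  have "(p*B2^2 + p*(p-1)*B2*B1 + B1^2)*p = (p*B2)^2 + (p-1)*(p*B2)*B1*p + p*B1^2"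
    by (simp add: algebra_simps power2_eq_square)
  also have "\<dots> = p*B1^2 + p*(p-1)*B1*B0 + B0^2" unfolding assms
    by (simp add: algebra_simps power2_eq_square)
  finally show ?thesis .
qed

lemma growth:
  fixes f :: "nat \<Rightarrow> real" and p :: real
  assumes p: "1 \<le> p" "p^3 = p^2+p+1"
    and rec: "\<And>j. j+3 \<le> k-1 \<Longrightarrow> f (j+3) = f(j+2) + f(j+1) + f j"
    and pos: "f 0 > 0" "f 1 > 0" "f 2 > 0"
  shows "3 \<le> i \<Longrightarrow> i \<le> k-1 \<Longrightarrow> max (f 0) (max (f 1) (f 2)) * p^i \<le> f i * p^5"
proof (induction i rule: less_induct)
  case (less i)
  define M where "M = max (f 0) (max (f 1) (f 2))"
  have M0: "M > 0" using pos unfolding M_def by auto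
  have r0: "f 3 = f 2 + f 1 + f 0" if "3 \<le> k-1" using rec[of 0] that by (simp add: eval_nat_numeral)
  have r1: "f 4 = f 3 + f 2 + f 1" if "4 \<le> k-1" using rec[of 1] that by (simp add: eval_nat_numeral)
  have r2: "f 5 = f 4 + f 3 + f 2" if "5 \<le> k-1" using rec[of 2] that by (simp add: eval_nat_numeral)
  have f3: "f 3 \<ge> M" if "3 \<le> k-1" using r0 that pos unfolding M_def by auto
  have f4: "f 4 \<ge> M" if "4 \<le> k-1" using r1 that pos f3 by auto
  have f5: "f 5 \<ge> M" if "5 \<le> k-1" using r2 that pos f3 f4 M0 by auto
  have pp: "p^a \<le> p^b" if "a \<le> b" for a b using that p by (simp add: power_increasing)
  consider "i = 3" | "i = 4" | "i = 5" | "i \<ge> 6" using less.prems by linarith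
  then show ?case
  proof cases
    case 1
    have "M * p^3 \<le> f 3 * p^5" using f3 less.prems 1 pp[of 3 5] M0 p
      by (intro mult_mono) auto
    then show ?thesis using 1 M_def by simp
  next
    case 2
    have "M * p^4 \<le> f 4 * p^5" using f4 less.prems 2 pp[of 4 5] M0 p
      by (intro mult_mono) auto
    then show ?thesis using 2 M_def by simp
  next
    case 3
    have "M * p^5 \<le> f 5 * p^5" using f5 less.prems 3 M0 p
      by (intro mult_right_mono) auto
    then show ?thesis using 3 M_def by simp
  next
    case 4
    obtain j where j: "i = j + 6" using 4 by (metis add.commute le_Suc_ex)
    have IH1: "M*p^(j+5) \<le> f (j+5) * p^5" using less.IH[of "j+5"] less.prems j M_def by simp
    have IH2: "M*p^(j+4) \<le> f (j+4) * p^5" using less.IH[of "j+4"] less.prems j M_def by simp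
    have IH3: "M*p^(j+3) \<le> f (j+3) * p^5" using less.IH[of "j+3"] less.prems j M_def by simp
    have r: "f (j+6) = f (j+5) + f (j+4) + f (j+3)" using rec[of "j+3"] less.prems j
      by (simp add: numeral_eq_Suc)
    have e: "p^(j+6) = p^(j+3)*p^3" by (simp add: add.commute flip: power_add)
    have "M*p^(j+6) = M*p^(j+3)*(p^2+p+1)" unfolding e p(2) by simp
    also have "\<dots> = M*p^(j+5) + M*p^(j+4) + M*p^(j+3)"
      by (simp add: power_add algebra_simps numeral_eq_Suc)
    also have "\<dots> \<le> f (j+6) * p^5" using IH1 IH2 IH3 r by (simp add: algebra_simps)
    finally show ?thesis using j M_def by simp
  qed
qed


lemma P0_bound:
  fixes p M x0 x1 x2 :: real
  assumes p: "1.83 \<le> p" "p \<le> 1.84"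
    and pos: "0 < x0" "0 < x1" "0 < x2" "x0 \<le> M" "x1 \<le> M" "x2 \<le> M"
  shows "p*(x2 - p*x1)^2 + p*(p-1)*(x2 - p*x1)*(x1 - p*x0) + (x1 - p*x0)^2 \<le> 16*M^2"
proof -
  define b0 where "b0 = x1 - p*x0"
  define b1 where "b1 = x2 - p*x1"
  define B where "B = (p*M)^2"
  have pM: "M \<le> p*M" using p pos by (simp add: mult_le_cancel_right1)
  have q1: "x0 \<le> p * x0" "x1 \<le> p*x1" using p pos by (simp_all add: mult_le_cancel_right1)
  have q2: "p*x0 \<le> p*M" "p*x1 \<le> p*M" using p pos by (simp_all add: mult_left_mono)
  have pM0: "0 \<le> p*M" using pM pos by linarith
  have "\<bar>b0\<bar> \<le> p*M" unfolding b0_def abs_le_iff using pM pos q1 q2 by linarith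
  moreover have "\<bar>b1\<bar> \<le> p*M" unfolding b1_def abs_le_iff using pM pos q1 q2 by linarith
  ultimately have "\<bar>b0\<bar> \<le> \<bar>p*M\<bar>" "\<bar>b1\<bar> \<le> \<bar>p*M\<bar>" using pM0 by auto
  then have h0: "b0^2 \<le> B" and h1: "b1^2 \<le> B" unfolding B_def abs_le_square_iff by auto
  have "0 \<le> (b1 - b0)^2" "0 \<le> (b1 + b0)^2" by simp_all
  then have h2: "b1*b0 \<le> B" using h0 h1 by (simp add: power2_eq_square algebra_simps)
  have pp: "0 \<le> p*(p-1)" using p by simp
  have "p*b1^2 \<le> p*B" using h1 p by (simp add: mult_left_mono)
  moreover have "p*(p-1)*(b1*b0) \<le> p*(p-1)*B" using h2 pp by (simp add: mult_left_mono)
  ultimately have "p*b1^2 + p*(p-1)*b1*b0 + b0^2 \<le> (p^2+1)*B" using h0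
    by (simp add: algebra_simps power2_eq_square)
  also have "\<dots> = ((p^2+1)*p^2) * M^2" unfolding B_def by (simp add: power_mult_distrib)
  also have "\<dots> \<le> 16 * M^2"
  proof (rule mult_right_mono)
    have "p^2 \<le> 1.84^2" using p by (intro power_mono) auto
    then have "p^2 \<le> 3.3856" by (simp add: power2_eq_square)
    moreover have "0 \<le> p^2" by simp
    ultimately have "(p^2+1)*p^2 \<le> 4.3856 * 3.3856" by (intro mult_mono) auto
    then show "(p^2+1)*p^2 \<le> 16" by simp
  qed simp
  finally show ?thesis unfolding b0_def b1_def by simp
qed


lemma P_final:
  fixes f :: "nat \<Rightarrow> real" and p :: real
  assumes p: "1.83 \<le> p" "p \<le> 1.84" "p^3 = p^2+p+1"
    and rec: "\<And>j. j+3 \<le> k-1 \<Longrightarrow> f (j+3) = f(j+2) + f(j+1) + f j"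
    and pos: "f 0 > 0" "f 1 > 0" "f 2 > 0" and k: "k \<ge> 4"
  shows "(p*(f(k-1) - p*f(k-2))^2 + p*(p-1)*(f(k-1) - p*f(k-2))*(f(k-2) - p*f(k-3))
          + (f(k-2) - p*f(k-3))^2) * p^(3*k) \<le> 16 * p^15 * (f(k-1))^2"
proof -
  define b where "b i = f (i+1) - p * f i" for i
  define P where "P i = p*(b(i+1))^2 + p*(p-1)*b(i+1)*b i + (b i)^2" for i
  have step: "P (i+1) * p = P i" if "i+3 \<le> k-1" for i
  proof -
    have "p*b(i+2) + p*(p-1)*b(i+1) + b i = -(p^3-p^2-p-1)*f(i+1)"
      using rec[OF that] unfolding b_def
      by (simp add: algebra_simps power2_eq_square power3_eq_cube eval_nat_numeral)
    then have "p*b(i+2) = -(p*(p-1)*b(i+1) + b i)" using p(3) by simp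
    from Pstep[OF this] show ?thesis unfolding P_def by (simp add: eval_nat_numeral)
  qed
  have iter: "j \<le> k-3 \<Longrightarrow> P j * p^j = P 0" for j
  proof (induction j)
    case 0 then show ?case by simp
  next
    case (Suc j)
    have "P (Suc j) * p^(Suc j) = (P (j+1) * p) * p^j" by (simp add: algebra_simps)
    also have "\<dots> = P j * p^j" using step[of j] Suc.prems by simp
    also have "\<dots> = P 0" using Suc by simp
    finally show ?case .
  qed
  define M where "M = max (f 0) (max (f 1) (f 2))"
  have gr: "M * p^(k-1) \<le> f (k-1) * p^5"
    using growth[of p k f "k-1"] p rec pos k unfolding M_def by simp
  have P0: "P 0 \<le> 16*M^2"
    using P0_bound[of p "f 0" "f 1" "f 2" M] p pos unfolding P_def b_def M_def
    by (simp add: eval_nat_numeral)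
  have Pk: "P (k-3) * p^(k-3) = P 0" using iter by simp
  have p0: "p > 0" using p by simp
  have e: "p^(3*k) = p^(k-3) * p^(k-1) * p^(k-1) * p^5"
    using k by (simp flip: power_add)
  have "P (k-3) * p^(3*k) = P 0 * (p^(k-1))^2 * p^5" unfolding e Pk[symmetric]
    by (simp add: power2_eq_square algebra_simps)
  also have "\<dots> \<le> 16*M^2 * (p^(k-1))^2 * p^5" using P0 p0
    by (intro mult_right_mono) auto
  also have "\<dots> = 16 * (M * p^(k-1))^2 * p^5" by (simp add: power_mult_distrib)
  also have "\<dots> \<le> 16 * (f (k-1) * p^5)^2 * p^5"
  proof -
    have "0 \<le> M" using pos M_def by auto
    then have "(M * p^(k-1))^2 \<le> (f (k-1) * p^5)^2" using gr p0
      by (intro power_mono) auto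
    then show ?thesis using p0 by (intro mult_right_mono) auto
  qed
  also have "\<dots> = 16 * p^15 * (f(k-1))^2" by (simp add: power_mult_distrib flip: power_mult power_add)
  finally have "P (k-3) * p^(3*k) \<le> 16 * p^15 * (f(k-1))^2" .
  moreover have "k-3+1 = k-2" "k-3+1+1 = k-1" using k by auto
  ultimately show ?thesis unfolding P_def b_def by simp
qed


lemma intervals:
  fixes p t N x y :: real
  assumes p: "1.83 \<le> p" "p \<le> 1.84" and t: "0 \<le> t"
    and P: "p*(N - p*y)^2 + p*(p-1)*(N - p*y)*(y - p*x) + (y - p*x)^2 \<le> 150400 * t^2"
  shows "\<bar>y - N/p\<bar> \<le> 250*t" and "\<bar>x - N/p^2\<bar> \<le> 450*t"
proof -
  define u where "u = N - p*y"
  define v where "v = y - p*x"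
  define Q where "Q = p*u^2 + p*(p-1)*u*v + v^2"
  have Q: "Q \<le> 150400 * t^2" using P unfolding Q_def u_def v_def .
  have p0: "p > 0" using p by simp
  have "(p-1)^2 \<le> 0.84^2" using p by (intro power_mono) auto
  then have "p*(p-1)^2 \<le> 1.84 * 0.84^2" using p by (intro mult_mono) auto
  then have pq: "p*(p-1)^2 \<le> 1.3" by (simp add: power2_eq_square)
  have "2*Q - p*u^2 = p*(u+(p-1)*v)^2 + (2 - p*(p-1)^2)*v^2"
    unfolding Q_def by (simp add: algebra_simps power2_eq_square)
  moreover have "0 \<le> p*(u+(p-1)*v)^2" using p0 by simp
  moreover have "0 \<le> (2 - p*(p-1)^2)*v^2" using pq by simp
  ultimately have c1: "p*u^2 \<le> 2*Q" by linarith
  have "2*Q - v^2 = 2*p*(u+(p-1)*v/2)^2 + (1 - p*(p-1)^2/2)*v^2"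
    unfolding Q_def by (simp add: algebra_simps power2_eq_square field_simps)
  moreover have "0 \<le> 2*p*(u+(p-1)*v/2)^2" using p0 by simp
  moreover have "0 \<le> (1 - p*(p-1)^2/2)*v^2" using pq by simp
  ultimately have c2: "v^2 \<le> 2*Q" by linarith
  have p3: "(153/25) \<le> p^3"
  proof -
    have "1.83^3 \<le> p^3" using p by (intro power_mono) auto
    then show ?thesis by (simp add: power3_eq_cube)
  qed
  have p2: "(167/50) \<le> p^2"
  proof -
    have "1.83^2 \<le> p^2" using p by (intro power_mono) auto
    then show ?thesis by (simp add: power2_eq_square)
  qed
  have ey: "(y - N/p)^2 * p^3 = p*u^2" unfolding u_def using p0
    by (simp add: field_simps power2_eq_square power3_eq_cube)
  have "(y - N/p)^2 * (153/25) \<le> (y - N/p)^2 * p^3" using p3 by (intro mult_left_mono) auto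
  then have "(y - N/p)^2 * (153/25) \<le> 300800 * t^2" using ey c1 Q by linarith
  then have "(y - N/p)^2 \<le> 62500*t^2" using zero_le_power2[of t] by linarith
  then have "(y - N/p)^2 \<le> (250*t)^2" by (simp add: power_mult_distrib)
  moreover have "0 \<le> 250*t" using t by simp
  ultimately show hy: "\<bar>y - N/p\<bar> \<le> 250*t" using power2_le_iff_abs_le by blast
  have ex: "(x - y/p)^2 * p^2 = v^2" unfolding v_def using p0
    by (simp add: field_simps power2_eq_square)
  have "(x - y/p)^2 * (167/50) \<le> (x - y/p)^2 * p^2" using p2 by (intro mult_left_mono) auto
  then have "(x - y/p)^2 * (167/50) \<le> 300800 * t^2" using ex c2 Q by linarith
  then have "(x - y/p)^2 \<le> 91204*t^2" using zero_le_power2[of t] by linarith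
  then have "(x - y/p)^2 \<le> (302*t)^2" by (simp add: power_mult_distrib)
  moreover have "0 \<le> 302*t" using t by simp
  ultimately have hx: "\<bar>x - y/p\<bar> \<le> 302*t" using power2_le_iff_abs_le by blast
  have "250*t \<le> (183/100)*(140*t)" using t by simp
  moreover have "(183/100)*(140*t) \<le> p*(140*t)" using p t by (intro mult_right_mono) auto
  ultimately have "\<bar>y - N/p\<bar> \<le> p * (140*t)" using hy by linarith
  then have "\<bar>y - N/p\<bar> / p \<le> 140*t" using pos_divide_le_eq[OF p0] by (metis mult.commute)
  moreover have "\<bar>(y - N/p)/p\<bar> = \<bar>y - N/p\<bar>/p" using p0 by (simp add: abs_divide)
  ultimately have hy': "\<bar>(y - N/p)/p\<bar> \<le> 140*t" by linarith
  have "x - N/p^2 = (x - y/p) + (y - N/p)/p" using p0 by (simp add: field_simps power2_eq_square)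
  then show "\<bar>x - N/p^2\<bar> \<le> 450*t" using hx hy' by linarith
qed



lemma count_int:
  fixes c R X :: real
  assumes "2*R < X" "0 < X"
  shows "finite {z::int. \<bar>real_of_int z - c\<bar> \<le> R}"
    and "real (card {z::int. \<bar>real_of_int z - c\<bar> \<le> R}) \<le> real_of_int \<lceil>X\<rceil>"
proof -
  let ?Z = "{z::int. \<bar>real_of_int z - c\<bar> \<le> R}"
  have sub: "?Z \<subseteq> {\<lceil>c - R\<rceil>..\<lfloor>c + R\<rfloor>}"
  proof
    fix z assume "z \<in> ?Z"
    then have "c - R \<le> of_int z" "of_int z \<le> c + R" by auto
    then show "z \<in> {\<lceil>c - R\<rceil>..\<lfloor>c + R\<rfloor>}" by (simp add: ceiling_le_iff le_floor_iff)
  qed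
  then show fin: "finite ?Z" using finite_subset by blast
  have "card ?Z \<le> card {\<lceil>c - R\<rceil>..\<lfloor>c + R\<rfloor>}" using sub by (intro card_mono) auto
  also have "\<dots> = nat (\<lfloor>c + R\<rfloor> - \<lceil>c - R\<rceil> + 1)" by simp
  finally have cz: "card ?Z \<le> nat (\<lfloor>c + R\<rfloor> - \<lceil>c - R\<rceil> + 1)" .
  have "real_of_int (\<lfloor>c + R\<rfloor> - \<lceil>c - R\<rceil>) \<le> (c + R) - (c - R)"
    unfolding of_int_diff using of_int_floor_le[of "c+R"] le_of_int_ceiling[of "c-R"] by linarith
  also have "\<dots> < X" using assms by simp
  also have "\<dots> \<le> real_of_int \<lceil>X\<rceil>" by simp
  finally have "\<lfloor>c + R\<rfloor> - \<lceil>c - R\<rceil> < \<lceil>X\<rceil>" by linarith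
  then have "nat (\<lfloor>c + R\<rfloor> - \<lceil>c - R\<rceil> + 1) \<le> nat \<lceil>X\<rceil>" by simp
  with cz have "card ?Z \<le> nat \<lceil>X\<rceil>" by linarith
  then have "real (card ?Z) \<le> real (nat \<lceil>X\<rceil>)" by simp
  also have "\<dots> = real_of_int \<lceil>X\<rceil>" using assms by simp
  finally show "real (card ?Z) \<le> real_of_int \<lceil>X\<rceil>" .
qed

lemma trib_rec:
  assumes "is_tribonacci k a" "j + 3 \<le> k - 1"
  shows "a!(j+3) = a!(j+2) + a!(j+1) + a!j"
proof -
  have "4 \<le> j+4 \<and> j+4 \<le> k" using assms(2) by auto
  then have "a!(j+4-1) = a!(j+4-2) + a!(j+4-3) + a!(j+4-4)"
    using assms(1) unfolding is_tribonacci_def by blast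
  then show ?thesis by (simp add: numeral_eq_Suc)
qed

lemma trib_determined:
  assumes a: "is_tribonacci k a" and b: "is_tribonacci k b" and k: "k \<ge> 3"
    and e1: "a!(k-1) = b!(k-1)" and e2: "a!(k-2) = b!(k-2)" and e3: "a!(k-3) = b!(k-3)"
  shows "a = b"
proof -
  have main: "d < k \<Longrightarrow> a!(k-1-d) = b!(k-1-d)" for d
  proof (induction d rule: less_induct)
    case (less d)
    consider "d = 0" | "d = 1" | "d = 2" | "d \<ge> 3" by linarith
    then show ?case
    proof cases
      case 1 then show ?thesis using e1 by simp
    next
      case 2 then show ?thesis using e2 by (simp add: numeral_eq_Suc)
    next
      case 3 then show ?thesis using e3 by (simp add: numeral_eq_Suc)
    next
      case 4
      define j where "j = k-1-d"
      have j3: "j + 3 \<le> k - 1" using 4 less.prems j_def by auto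
      have i1: "j+1 = k-1-(d-1)" "j+2 = k-1-(d-2)" "j+3 = k-1-(d-3)" using 4 less.prems j_def by auto
      have "a!(j+1) = b!(j+1)" "a!(j+2) = b!(j+2)" "a!(j+3) = b!(j+3)"
        unfolding i1 using less.IH[of "d-1"] less.IH[of "d-2"] less.IH[of "d-3"] 4 less.prems by auto
      moreover have "a!(j+3) = a!(j+2) + a!(j+1) + a!j" "b!(j+3) = b!(j+2) + b!(j+1) + b!j"
        using trib_rec[OF a j3] trib_rec[OF b j3] by auto
      ultimately have "a!j = b!j" by linarith
      then show ?thesis using j_def by simp
    qed
  qed
  show ?thesis
  proof (rule nth_equalityI)
    show "length a = length b" using a b unfolding is_tribonacci_def by simp
    fix i assume "i < length a"
    then have "i < k" using a unfolding is_tribonacci_def by simp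
    then show "a!i = b!i" using main[of "k-1-i"] by (simp add: Suc_diff_Suc)
  qed
qed


theorem theorem2:
  fixes n k :: nat
  assumes "n > 0" and "k \<ge> 4"
  shows "real (card {a. is_tribonacci k a \<and> positive_trib a \<and> terminates_at k a (int n)})
         \<le> (real_of_int \<lceil>1500 * real n / trib_phi powr (3 * real k / 2)\<rceil>)^2"
proof -
  define p where "p = trib_phi"
  have p: "1.83 \<le> p" "p \<le> 1.84" "p^3 = p^2 + p + 1" using phi_props unfolding p_def by auto
  have p0: "p > 0" using p by simp
  define S where "S = p powr (3 * real k / 2)"
  have S0: "S > 0" unfolding S_def using p0 by simp
  have SS: "S^2 = p^(3*k)"
  proof -
    have "S^2 = p powr (3 * real k / 2 + 3 * real k / 2)"
      unfolding S_def power2_eq_square by (simp flip: powr_add)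
    also have "\<dots> = p powr (real (3*k))" by simp
    also have "\<dots> = p^(3*k)" using powr_realpow[OF p0, of "3*k"] by simp
    finally show ?thesis .
  qed
  define t where "t = real n / S"
  have t0: "t > 0" unfolding t_def using S0 assms by simp
  have tS: "t^2 * S^2 = (real n)^2" unfolding t_def using S0 by (simp add: field_simps)
  have p15: "16 * p^15 \<le> 150400"
  proof -
    have "p^15 \<le> 1.84^15" using p by (intro power_mono) auto
    moreover have "(1.84::real)^15 \<le> 9400" by (simp add: power_divide)
    ultimately show ?thesis by simp
  qed
  define Sset where "Sset = {a. is_tribonacci k a \<and> positive_trib a \<and> terminates_at k a (int n)}"
  define A where "A = {z::int. \<bar>real_of_int z - real n / p^2\<bar> \<le> 450*t}"
  define B where "B = {z::int. \<bar>real_of_int z - real n / p\<bar> \<le> 250*t}"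
  define g where "g a = (a!(k-3), a!(k-2))" for a :: "int list"
  have gmap: "g a \<in> A \<times> B" if "a \<in> Sset" for a
  proof -
    define f where "f i = real_of_int (a!i)" for i
    have tr: "is_tribonacci k a" and ps: "positive_trib a" and te: "a!(k-1) = int n"
      using that unfolding Sset_def terminates_at_def by auto
    have rec: "f (j+3) = f(j+2) + f(j+1) + f j" if "j+3 \<le> k-1" for j
      using trib_rec[OF tr that] unfolding f_def by simp
    have pos: "f 0 > 0" "f 1 > 0" "f 2 > 0" using ps unfolding positive_trib_def f_def by auto
    have fn: "f (k-1) = real n" using te unfolding f_def by simp
    let ?P = "p*(f(k-1) - p*f(k-2))^2 + p*(p-1)*(f(k-1) - p*f(k-2))*(f(k-2) - p*f(k-3))
          + (f(k-2) - p*f(k-3))^2"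
    have "?P * S^2 \<le> 16 * p^15 * (real n)^2"
      using P_final[of p k f, OF p rec pos assms(2)] fn SS by simp
    also have "\<dots> \<le> 150400 * (real n)^2" using p15 by (intro mult_right_mono) auto
    also have "\<dots> = (150400 * t^2) * S^2" using tS by simp
    finally have "?P \<le> 150400 * t^2" using S0 by simp
    then have "?P \<le> 150400 * t^2" .
    from intervals[OF p(1) p(2) less_imp_le[OF t0] this[unfolded fn]]
    show ?thesis unfolding g_def A_def B_def f_def by simp
  qed
  have inj: "inj_on g Sset"
  proof (rule inj_onI)
    fix a b assume ab: "a \<in> Sset" "b \<in> Sset" "g a = g b"
    show "a = b"
      by (rule trib_determined[of k a b]) (use ab assms(2) in \<open>auto simp: Sset_def g_def terminates_at_def\<close>)
  qed
  have X0: "0 < 1500 * t" using t0 by simp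
  have fA: "finite A" and cA: "real (card A) \<le> real_of_int \<lceil>1500*t\<rceil>"
    unfolding A_def using count_int[of "450*t" "1500*t"] t0 by auto
  have fB: "finite B" and cB: "real (card B) \<le> real_of_int \<lceil>1500*t\<rceil>"
    unfolding B_def using count_int[of "250*t" "1500*t"] t0 by auto
  have "card Sset = card (g ` Sset)" using inj by (simp add: card_image)
  also have "\<dots> \<le> card (A \<times> B)" proof (rule card_mono)
    show "finite (A \<times> B)" using fA fB by simp
    show "g ` Sset \<subseteq> A \<times> B" using gmap by blast
  qed
  also have "\<dots> = card A * card B" by (simp add: card_cartesian_product)
  finally have "real (card Sset) \<le> real (card A) * real (card B)"
    by (metis of_nat_le_iff of_nat_mult)
  also have "\<dots> \<le> real_of_int \<lceil>1500*t\<rceil> * real_of_int \<lceil>1500*t\<rceil>"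
    using cA cB X0 by (intro mult_mono) auto
  also have "\<dots> = (real_of_int \<lceil>1500 * real n / trib_phi powr (3 * real k / 2)\<rceil>)^2"
    unfolding t_def S_def p_def by (simp add: power2_eq_square)
  finally show ?thesis unfolding Sset_def .
qed

end
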